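(* Let $(X,d,A)$ be a metric pair and $p\in[1,\infty]$. If $(X,d)$ is separable, then $(\overline{D}_p(X,A),W_p)$ is separable. Conversely, if $(\overline{D}_p(X,A),W_p)$ is separable, then $(X/A,d_p)$ is separable.
   Context: A metric on $X$ is a map $d:X\times X\to[0,\infty]$ with $d(x,x)=0$, symmetry and the triangle inequality (infinite distances allowed, $d(x,y)=0$ need not imply $x=y$); a metric pair $(X,d,A)$ is such a space with a closed subset $A$. Write $d(x,A)=\inf_{a\in A}d(x,a)$, $A^\delta=\{x:d(x,A)<\delta\}$. $\overline{D}(X,A)$ is the set of countable formal sums $\hat\alpha=\sum_{i\in I}x_i$ of points of $X\setminus A$ (repetitions allowed); $0$ the empty sum. A matching of $\hat\alpha=\sum_{i\in I}x_i$, $\hat\beta=\sum_{j\in J}y_j$ is a formal sum $\sum_{k\in K}(x_k,y_{\varphi(k)})+\sum_{i\in I\setminus K}(x_i,z_i)+\sum_{j\in J\setminus\varphi(K)}(w_j,y_j)$ with $K\subset I$, $\varphi$ injective, $z_i,w_j\in A$; its $p$-cost is the $\ell^p$ norm (sup norm if $p=\infty$) of the distances of paired points; $W_p$ is the infimum of $p$-costs. $u_\delta(\alpha)$, $\ell_\delta(\alpha)$ are the restrictions of $\hat\alpha$ to $X\setminus A^\delta$ and to $A^\delta\setminus A$. For $p<\infty$, $\overline{D}_p(X,A)=\{\alpha: |u_\infty(\alpha)|<\infty,\ W_p(\ell_\infty(\alpha),0)<\infty\}$; $\overline{D}_\infty(X,A)=\{\alpha:|u_\delta(\alpha)|<\infty\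 \forall\delta>0\}$. $X/A$ is the quotient set collapsing $A$ to a point, with the metric $d_p([x],[y])=\min\big(d(x,y),\|(d(x,A),d(y,A))\|_p\big)$ (which is well defined on $X/A$). *)

theory Defs
  imports "HOL-Analysis.Analysis"
begin

definition emetric_on :: "'a set \<Rightarrow> ('a \<Rightarrow> 'a \<Rightarrow> ennreal) \<Rightarrow> bool" where
  "emetric_on X d \<longleftrightarrow> (\<forall>x\<in>X. d x x = 0) \<and> (\<forall>x\<in>X. \<forall>y\<in>X. d x y = d y x)
     \<and> (\<forall>x\<in>X. \<forall>y\<in>X. \<forall>z\<in>X. d x z \<le> d x y + d y z)"

definition setdist_e :: "('a \<Rightarrow> 'a \<Rightarrow> ennreal) \<Rightarrow> 'a \<Rightarrow> 'a set \<Rightarrow> ennreal" where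
  "setdist_e d x A = (INF a\<in>A. d x a)"

definition eclosed :: "'a set \<Rightarrow> ('a \<Rightarrow> 'a \<Rightarrow> ennreal) \<Rightarrow> 'a set \<Rightarrow> bool" where
  "eclosed X d A \<longleftrightarrow> A \<subseteq> X \<and> (\<forall>x\<in>X. setdist_e d x A = 0 \<longrightarrow> x \<in> A)"

definition metric_pair :: "'a set \<Rightarrow> ('a \<Rightarrow> 'a \<Rightarrow> ennreal) \<Rightarrow> 'a set \<Rightarrow> bool" where
  "metric_pair X d A \<longleftrightarrow> emetric_on X d \<and> eclosed X d A"

definition separable_e :: "'b set \<Rightarrow> ('b \<Rightarrow> 'b \<Rightarrow> ennreal) \<Rightarrow> bool" where
  "separable_e S \<delta> \<longleftrightarrow> (\<exists>D\<subseteq>S. countable D \<and> (\<forall>x\<in>S. \<forall>e>0. \<exists>c\<in>D. \<delta> x c < e))"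

definition enn_pow :: "real \<Rightarrow> ennreal \<Rightarrow> ennreal" where
  "enn_pow q c = (if c = top then top else ennreal (enn2real c powr q))"

definition lpnorm :: "ennreal \<Rightarrow> ('i \<Rightarrow> ennreal) \<Rightarrow> 'i set \<Rightarrow> ennreal" where
  "lpnorm p f S = (if p = top then (SUP i\<in>S. f i)
      else enn_pow (1 / enn2real p) (\<Sum>\<^sub>\<infinity>i\<in>S. enn_pow (enn2real p) (f i)))"

text \<open>Countable formal sums: a countable index set (WLOG a subset of nat) and the points.\<close>
type_synonym 'a dgm = "nat set \<times> (nat \<Rightarrow> 'a)"

definition dgms :: "'a set \<Rightarrow> 'a set \<Rightarrow> 'a dgm set" where
  "dgms X A = {(I, x). \<forall>i\<in>I. x i \<in> X - A}"

definition empty_dgm :: "'a dgm" where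
  "empty_dgm = ({}, (\<lambda>_. undefined))"

definition matchings :: "'a set \<Rightarrow> 'a dgm \<Rightarrow> 'a dgm
    \<Rightarrow> (nat set \<times> (nat \<Rightarrow> nat) \<times> (nat \<Rightarrow> 'a) \<times> (nat \<Rightarrow> 'a)) set" where
  "matchings A \<alpha> \<beta> = {(K, \<phi>, z, w). K \<subseteq> fst \<alpha> \<and> inj_on \<phi> K \<and> \<phi> ` K \<subseteq> fst \<beta>
      \<and> (\<forall>i\<in>fst \<alpha> - K. z i \<in> A) \<and> (\<forall>j\<in>fst \<beta> - \<phi> ` K. w j \<in> A)}"

definition match_cost :: "ennreal \<Rightarrow> ('a \<Rightarrow> 'a \<Rightarrow> ennreal) \<Rightarrow> 'a dgm \<Rightarrow> 'a dgm
    \<Rightarrow> nat set \<Rightarrow> (nat \<Rightarrow> nat) \<Rightarrow> (nat \<Rightarrow> 'a) \<Rightarrow> (nat \<Rightarrow> 'a) \<Rightarrow> ennreal" where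
  "match_cost p d \<alpha> \<beta> K \<phi> z w =
     lpnorm p (\<lambda>s. case s of
                  Inl i \<Rightarrow> (if i \<in> K then d (snd \<alpha> i) (snd \<beta> (\<phi> i)) else d (snd \<alpha> i) (z i))
                | Inr j \<Rightarrow> d (w j) (snd \<beta> j))
       (Inl ` fst \<alpha> \<union> Inr ` (fst \<beta> - \<phi> ` K))"

definition Wp :: "ennreal \<Rightarrow> ('a \<Rightarrow> 'a \<Rightarrow> ennreal) \<Rightarrow> 'a set \<Rightarrow> 'a dgm \<Rightarrow> 'a dgm \<Rightarrow> ennreal" where
  "Wp p d A \<alpha> \<beta> = (INF m\<in>matchings A \<alpha> \<beta>.
      (case m of (K, \<phi>, z, w) \<Rightarrow> match_cost p d \<alpha> \<beta> K \<phi> z w))"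

definition u_part :: "('a \<Rightarrow> 'a \<Rightarrow> ennreal) \<Rightarrow> 'a set \<Rightarrow> ennreal \<Rightarrow> 'a dgm \<Rightarrow> 'a dgm" where
  "u_part d A \<delta> \<alpha> = ({i\<in>fst \<alpha>. \<not> setdist_e d (snd \<alpha> i) A < \<delta>}, snd \<alpha>)"

definition l_part :: "('a \<Rightarrow> 'a \<Rightarrow> ennreal) \<Rightarrow> 'a set \<Rightarrow> ennreal \<Rightarrow> 'a dgm \<Rightarrow> 'a dgm" where
  "l_part d A \<delta> \<alpha> = ({i\<in>fst \<alpha>. setdist_e d (snd \<alpha> i) A < \<delta>}, snd \<alpha>)"

definition Dp :: "ennreal \<Rightarrow> ('a \<Rightarrow> 'a \<Rightarrow> ennreal) \<Rightarrow> 'a set \<Rightarrow> 'a set \<Rightarrow> 'a dgm set" where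
  "Dp p d X A = (if p = top
      then {\<alpha>\<in>dgms X A. \<forall>\<delta>::real. \<delta> > 0 \<longrightarrow> finite (fst (u_part d A (ennreal \<delta>) \<alpha>))}
      else {\<alpha>\<in>dgms X A. finite (fst (u_part d A top \<alpha>)) \<and> Wp p d A (l_part d A top \<alpha>) empty_dgm < top})"

definition dq :: "ennreal \<Rightarrow> ('a \<Rightarrow> 'a \<Rightarrow> ennreal) \<Rightarrow> 'a set \<Rightarrow> 'a \<Rightarrow> 'a \<Rightarrow> ennreal" where
  "dq p d A x y = min (d x y)
      (lpnorm p (\<lambda>b. if b then setdist_e d x A else setdist_e d y A) (UNIV :: bool set))"

definition quotX :: "'a set \<Rightarrow> 'a set \<Rightarrow> 'a set set" where
  "quotX X A = (\<lambda>x. if x \<in> A then A else {x}) ` X"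

definition dquot :: "ennreal \<Rightarrow> ('a \<Rightarrow> 'a \<Rightarrow> ennreal) \<Rightarrow> 'a set \<Rightarrow> 'a set \<Rightarrow> 'a set \<Rightarrow> ennreal" where
  "dquot p d A c c' = dq p d A (SOME x. x \<in> c) (SOME x. x \<in> c')"

end

theory Submission
  imports Defs
begin


lemma summ_enn[simp]: "(f::_ \<Rightarrow> ennreal) summable_on S"
  by (simp add: nonneg_summable_on_complete)

lemma ep_top: "enn_pow q c = top \<longleftrightarrow> c = top"
  by (simp add: enn_pow_def)

lemma ep_lt: "c < top \<Longrightarrow> enn_pow q c < top"
  by (simp add: enn_pow_def)

lemma ep_zero: "enn_pow q 0 = 0"
  by (simp add: enn_pow_def)

lemma ep_inv: assumes "q > 0" shows "enn_pow (1/q) (enn_pow q c) = c"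
proof (cases "c = top")
  case True then show ?thesis by (simp add: enn_pow_def)
next
  case False
  then obtain r where r: "c = ennreal r" "r \<ge> 0" by (cases c) auto
  have "(r powr q) powr (1/q) = r" using assms r(2) by (simp add: powr_powr)
  then show ?thesis using r by (simp add: enn_pow_def)
qed

lemma ep_mono: assumes "q > 0" "c \<le> c'" shows "enn_pow q c \<le> enn_pow q c'"
proof (cases "c' = top")
  case True then show ?thesis by (simp add: enn_pow_def)
next
  case False
  then have "c \<noteq> top" using assms top.extremum_unique by auto
  then obtain r r' where r: "c = ennreal r" "r \<ge> 0" "c' = ennreal r'" "r' \<ge> 0"
    using False by (cases c; cases c') auto
  then have "r \<le> r'" using assms by auto
  then have "r powr q \<le> r' powr q" using r assms by (simp add: powr_mono2)
  then show ?thesis using r by (simp add: enn_pow_def)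
qed

lemma ep_less: assumes "q > 0" "c < ennreal t" "t \<ge> 0" shows "enn_pow q c < ennreal (t powr q)"
proof -
  have "c \<noteq> top" using assms by auto
  then obtain r where r: "c = ennreal r" "r \<ge> 0" by (cases c) auto
  then have "r < t" using assms by (simp add: ennreal_less_iff)
  then have "r powr q < t powr q" using r assms by (simp add: powr_less_mono2)
  then show ?thesis using r by (simp add: enn_pow_def ennreal_less_iff)
qed

lemma ep_upper: assumes "q > 0" "S < ennreal (e powr q)" "e > 0"
  shows "enn_pow (1/q) S < ennreal e"
proof -
  have "S \<noteq> top" using assms by auto
  then obtain s where s: "S = ennreal s" "s \<ge> 0" by (cases S) auto
  then have "s < e powr q" using assms by (simp add: ennreal_less_iff)
  then have "s powr (1/q) < (e powr q) powr (1/q)" using s assms by (intro powr_less_mono2) auto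
  also have "\<dots> = e" using assms by (simp add: powr_powr)
  finally show ?thesis using s assms by (simp add: enn_pow_def ennreal_lessI)
qed

lemma p_real: assumes "1 \<le> p" "p \<noteq> top" shows "enn2real p \<ge> 1"
  using assms by (metis enn2real_1 enn2real_mono ennreal_1 top.not_eq_extremum)

lemma lp_lower: assumes "1 \<le> p" "i \<in> S" shows "f i \<le> lpnorm p f S"
proof (cases "p = top")
  case True then show ?thesis using assms by (simp add: lpnorm_def SUP_upper)
next
  case False
  define q where "q = enn2real p"
  have q: "q > 0" using p_real[OF assms(1) False] q_def by simp
  have "enn_pow q (f i) \<le> (\<Sum>\<^sub>\<infinity>i\<in>S. enn_pow q (f i))"
    using infsum_mono_neutral[where A="{i}" and B=S and f="\<lambda>i. enn_pow q (f i)" and g="\<lambda>i. enn_pow q (f i)", OF summ_enn summ_enn] assms by simp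
  then have "enn_pow (1/q) (enn_pow q (f i)) \<le> enn_pow (1/q) (\<Sum>\<^sub>\<infinity>i\<in>S. enn_pow q (f i))"
    using q by (intro ep_mono) auto
  then show ?thesis using q False by (simp add: ep_inv lpnorm_def q_def)
qed

lemma q_pos: assumes "1 \<le> p" "p \<noteq> top" shows "enn2real p > 0"
  using p_real[OF assms] by simp

lemma sum_enn_less_top: assumes "finite S" "\<And>s. s \<in> S \<Longrightarrow> (f s::ennreal) < top"
  shows "sum f S < top"
  using assms by (induction S rule: finite_induct) (auto simp: ennreal_add_less_top)

lemma lp_fin_top: assumes "1 \<le> p" "finite S" "\<And>s. s \<in> S \<Longrightarrow> f s < top"
  shows "lpnorm p f S < top"
proof (cases "p = top")
  case True
  have "(SUP s\<in>S. f s) \<le> sum f S"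
    by (rule SUP_least) (use assms in \<open>auto intro: member_le_sum\<close>)
  also have "\<dots> < top" using sum_enn_less_top assms by blast
  finally show ?thesis using True by (simp add: lpnorm_def)
next
  case False
  define q where "q = enn2real p"
  have "(\<Sum>\<^sub>\<infinity>i\<in>S. enn_pow q (f i)) = (\<Sum>i\<in>S. enn_pow q (f i))" using assms by simp
  also have "\<dots> < top" using assms by (intro sum_enn_less_top) (auto simp: ep_lt)
  finally show ?thesis using False by (simp add: lpnorm_def ep_lt flip: q_def)
qed

lemma lp_pair: assumes "1 \<le> p" shows "lpnorm p (\<lambda>b. if b then t else 0) (UNIV::bool set) = t"
proof (cases "p = top")
  case True
  then show ?thesis by (simp add: lpnorm_def UNIV_bool sup.absorb2)
next
  case False
  define q where "q = enn2real p"
  have q: "q > 0" using q_pos[OF assms False] q_def by simp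
  have "(\<Sum>\<^sub>\<infinity>i\<in>(UNIV::bool set). enn_pow q (if i then t else 0)) = enn_pow q t"
    by (simp add: UNIV_bool ep_zero)
  then show ?thesis using False q by (simp add: lpnorm_def ep_inv flip: q_def)
qed

lemma tail: fixes g :: "nat \<Rightarrow> ennreal"
  assumes "infsum g L < top" "0 < \<epsilon>"
  shows "\<exists>F. finite F \<and> F \<subseteq> L \<and> infsum g (L - F) < \<epsilon>"
proof (cases "infsum g L < \<epsilon>")
  case True then show ?thesis by (intro exI[of _ "{}"]) auto
next
  case False
  define S where "S = infsum g L"
  have S: "S = (SUP F\<in>{F. finite F \<and> F \<subseteq> L}. sum g F)"
    unfolding S_def by (rule nonneg_infsum_complete) auto
  have "S - \<epsilon> < S" using False assms unfolding S_def
    by (simp add: ennreal_between)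
  then obtain F where F: "finite F" "F \<subseteq> L" "S - \<epsilon> < sum g F"
    unfolding S by (auto simp: less_SUP_iff)
  have "S = infsum g (F \<union> (L - F))" using F S_def by (simp add: Un_absorb1)
  also have "\<dots> = sum g F + infsum g (L - F)"
    by (subst infsum_Un_disjoint) (use F in auto)
  finally have eq: "S = sum g F + infsum g (L - F)" .
  have "infsum g (L - F) < \<epsilon>"
  proof (rule ccontr)
    assume "\<not> infsum g (L - F) < \<epsilon>"
    then have "sum g F + \<epsilon> \<le> S" using eq by (simp add: add_left_mono)
    then have "sum g F \<le> S - \<epsilon>"
      using assms S_def False by (simp add: ennreal_le_minus_iff)
    then show False using F by simp
  qed
  then show ?thesis using F by blast
qed

lemma Wp_le: assumes "(K, \<phi>, z, w) \<in> matchings A \<alpha> \<beta>"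
  shows "Wp p d A \<alpha> \<beta> \<le> match_cost p d \<alpha> \<beta> K \<phi> z w"
  unfolding Wp_def using INF_lower[OF assms, of "\<lambda>m. case m of (K, \<phi>, z, w) \<Rightarrow> match_cost p d \<alpha> \<beta> K \<phi> z w"]
  by simp

lemma Dp_sub: "Dp p d X A \<subseteq> dgms X A"
  by (auto simp: Dp_def)

lemma setdist_lt: assumes "setdist_e d x A < c" obtains a where "a \<in> A" "d x a < c"
  using assms by (auto simp: setdist_e_def INF_less_iff)

lemma setdist_le: "a \<in> A \<Longrightarrow> setdist_e d x A \<le> d x a"
  by (simp add: setdist_e_def INF_lower)

lemma finite_Dp: assumes "1 \<le> p" "finite F" "\<And>i. i \<in> F \<Longrightarrow> y i \<in> X - A"
  shows "(F, y) \<in> Dp p d X A"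
proof -
  have dg: "(F, y) \<in> dgms X A" using assms by (auto simp: dgms_def)
  show ?thesis
  proof (cases "p = top")
    case True
    then show ?thesis using dg assms(2) by (auto simp: Dp_def u_part_def)
  next
    case False
    define L where "L = {i\<in>F. setdist_e d (y i) A < top}"
    define z where "z i = (SOME a. a \<in> A \<and> d (y i) a < top)" for i
    have z: "z i \<in> A \<and> d (y i) (z i) < top" if "i \<in> L" for i
    proof -
      have "setdist_e d (y i) A < top" using that unfolding L_def by auto
      then obtain a where "a \<in> A" "d (y i) a < top" by (rule setdist_lt)
      then show ?thesis unfolding z_def by (rule someI[where x=a, OF conjI])
    qed
    have lp: "l_part d A top (F, y) = (L, y)" by (simp add: l_part_def L_def)
    have m: "({}, id, z, z) \<in> matchings A (L, y) empty_dgm"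
      using z by (auto simp: matchings_def empty_dgm_def)
    have "Wp p d A (L, y) empty_dgm \<le> match_cost p d (L, y) empty_dgm {} id z z"
      by (rule Wp_le[OF m])
    also have "\<dots> < top" unfolding match_cost_def
      using assms(1,2) z by (intro lp_fin_top) (auto simp: L_def empty_dgm_def)
    finally show ?thesis using dg False assms(2) lp by (auto simp: Dp_def u_part_def)
  qed
qed

lemma part2: assumes mp: "metric_pair X d A" and p1: "1 \<le> p"
  and sep: "separable_e (Dp p d X A) (Wp p d A)"
  shows "separable_e (quotX X A) (dquot p d A)"
proof -
  obtain DD where DD: "DD \<subseteq> Dp p d X A" "countable DD"
     "\<And>\<alpha> e. \<alpha> \<in> Dp p d X A \<Longrightarrow> e > 0 \<Longrightarrow> \<exists>c\<in>DD. Wp p d A \<alpha> c < e"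
    using sep unfolding separable_e_def by blast
  have AX: "A \<subseteq> X" using mp by (simp add: metric_pair_def eclosed_def)
  have d0: "\<And>x. x \<in> X \<Longrightarrow> d x x = 0" using mp by (simp add: metric_pair_def emetric_on_def)
  define P where "P = (\<Union>\<sigma>\<in>DD. (\<lambda>i. {snd \<sigma> i}) ` fst \<sigma>) \<union> (if A = {} then {} else {A})"
  show ?thesis unfolding separable_e_def
  proof (intro exI[of _ P] conjI ballI allI impI)
    show "P \<subseteq> quotX X A"
    proof
      fix c assume "c \<in> P"
      then consider (a) \<sigma> i where "\<sigma> \<in> DD" "i \<in> fst \<sigma>" "c = {snd \<sigma> i}" | (b) "A \<noteq> {}" "c = A"
        unfolding P_def by (auto split: if_splits)
      then show "c \<in> quotX X A"
      proof cases
        case a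
        then have "snd \<sigma> i \<in> X - A" using DD(1) Dp_sub by (force simp: dgms_def)
        then show ?thesis using a unfolding quotX_def by (intro image_eqI[of _ _ "snd \<sigma> i"]) auto
      next
        case b
        then obtain a where "a \<in> A" by blast
        then show ?thesis using b AX unfolding quotX_def by (intro image_eqI[of _ _ a]) auto
      qed
    qed
    show "countable P" unfolding P_def
      by (intro countable_Un countable_UN[OF DD(2)] countable_image) (auto intro: countable_subset[OF subset_UNIV])
  next
    fix c and e :: ennreal assume c: "c \<in> quotX X A" and e: "e > 0"
    obtain x where x: "x \<in> X" "c = (if x \<in> A then A else {x})" using c unfolding quotX_def by blast
    define a where "a = (SOME a. a \<in> A)"
    show "\<exists>c'\<in>P. dquot p d A c c' < e"
    proof (cases "x \<in> A")
      case True
      then have aA: "a \<in> A" unfolding a_def by (rule someI)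
      have "dquot p d A A A \<le> d a a" by (simp add: dquot_def dq_def flip: a_def)
      also have "\<dots> = 0" using aA AX d0 by auto
      finally have "dquot p d A A A < e" using e by simp
      moreover have "A \<in> P" using True unfolding P_def by auto
      ultimately show ?thesis using True x by auto
    next
      case False
      have "({0::nat}, \<lambda>_. x) \<in> Dp p d X A" using False x by (intro finite_Dp p1) auto
      then obtain \<sigma> where \<sigma>: "\<sigma> \<in> DD" "Wp p d A ({0::nat}, \<lambda>_. x) \<sigma> < e" using DD(3) e by blast
      then obtain K \<phi> z w where m: "(K, \<phi>, z, w) \<in> matchings A ({0::nat}, \<lambda>_. x) \<sigma>"
         and mc: "match_cost p d ({0::nat}, \<lambda>_. x) \<sigma> K \<phi> z w < e"
        unfolding Wp_def by (auto simp: INF_less_iff)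
      define f where "f = (\<lambda>s. case s of
                  Inl i \<Rightarrow> (if i \<in> K then d (snd ({0::nat}, \<lambda>_. x) i) (snd \<sigma> (\<phi> i)) else d (snd ({0::nat}, \<lambda>_. x) i) (z i))
                | Inr j \<Rightarrow> d (w j) (snd \<sigma> j))"
      have low: "f (Inl 0) < e"
      proof -
        have "f (Inl 0) \<le> match_cost p d ({0::nat}, \<lambda>_. x) \<sigma> K \<phi> z w"
          unfolding match_cost_def f_def[symmetric] by (rule lp_lower[OF p1]) auto
        then show ?thesis using mc by simp
      qed
      show ?thesis
      proof (cases "0 \<in> K")
        case True
        define y where "y = snd \<sigma> (\<phi> 0)"
        have "\<phi> 0 \<in> fst \<sigma>" using m True by (auto simp: matchings_def)
        then have "{y} \<in> P" unfolding P_def y_def using \<sigma>(1) by auto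
        moreover have "dquot p d A {x} {y} \<le> d x y" by (simp add: dquot_def dq_def)
        moreover have "d x y < e" using low True by (simp add: f_def y_def)
        ultimately show ?thesis using False x by (intro bexI[of _ "{y}"]) auto
      next
        case K: False
        have zA: "z 0 \<in> A" using m K by (auto simp: matchings_def)
        then have aA: "a \<in> A" unfolding a_def by (rule someI)
        have "A \<in> P" using zA unfolding P_def by auto
        have sa: "setdist_e d a A = 0" using setdist_le[OF aA, of d a] d0 aA AX by auto
        have "dquot p d A {x} A \<le> lpnorm p (\<lambda>b. if b then setdist_e d x A else setdist_e d a A) UNIV"
          by (simp add: dquot_def dq_def flip: a_def)
        also have "(\<lambda>b. if b then setdist_e d x A else setdist_e d a A) = (\<lambda>b. if b then setdist_e d x A else 0)"
          using sa by auto
        also have "lpnorm p \<dots> UNIV = setdist_e d x A" by (rule lp_pair[OF p1])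
        also have "\<dots> \<le> d x (z 0)" by (rule setdist_le[OF zA])
        also have "\<dots> < e" using low K by (simp add: f_def)
        finally show ?thesis using False x \<open>A \<in> P\<close> by auto
      qed
    qed
  qed
qed

lemma lp_Inl: "lpnorm p (\<lambda>s. case s of Inl i \<Rightarrow> h i | Inr j \<Rightarrow> k j) (Inl ` I) = lpnorm p h I"
  unfolding lpnorm_def by (simp add: image_image infsum_reindex comp_def)

lemma cost_eq: assumes "F \<subseteq> I"
  shows "match_cost p d (I, x) (F, y) F id z w
     = lpnorm p (\<lambda>i. if i \<in> F then d (x i) (y i) else d (x i) (z i)) I"
proof -
  have "match_cost p d (I, x) (F, y) F id z w = lpnorm p (\<lambda>s. case s of Inl i \<Rightarrow> (if i \<in> F then d (x i) (y i) else d (x i) (z i)) | Inr j \<Rightarrow> d (w j) (y j)) (Inl ` I)"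
    unfolding match_cost_def fst_conv snd_conv id_apply image_id Diff_cancel image_empty Un_empty_right ..
  then show ?thesis by (simp only: lp_Inl)
qed



lemma part1: assumes mp: "metric_pair X d A" and p1: "1 \<le> p"
  and sep: "separable_e X d"
  shows "separable_e (Dp p d X A) (Wp p d A)"
proof -
  obtain D where D: "D \<subseteq> X" "countable D" "\<And>x e. x \<in> X \<Longrightarrow> e > 0 \<Longrightarrow> \<exists>c\<in>D. d x c < e"
    using sep unfolding separable_e_def by blast
  have cl: "\<And>x. x \<in> X \<Longrightarrow> setdist_e d x A = 0 \<Longrightarrow> x \<in> A"
    using mp by (simp add: metric_pair_def eclosed_def)
  define D' where "D' = D - A"
  have approx: "\<exists>y\<in>D'. d x y < ennreal \<eta>" if x: "x \<in> X - A" and \<eta>: "\<eta> > 0" for x \<eta>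
  proof -
    have "setdist_e d x A > 0" using cl[of x] x by (auto simp: zero_less_iff_neq_zero)
    then have "min (ennreal \<eta>) (setdist_e d x A) > 0" using \<eta> by simp
    then obtain y where y: "y \<in> D" "d x y < min (ennreal \<eta>) (setdist_e d x A)" using D(3) x by blast
    have "y \<notin> A"
    proof
      assume "y \<in> A"
      then have "setdist_e d x A \<le> d x y" by (rule setdist_le)
      then show False using y(2) by (simp add: leD)
    qed
    then show ?thesis using y unfolding D'_def by auto
  qed
  define DD where "DD = (\<Union>F\<in>{F::nat set. finite F}. (\<lambda>y. (F, y)) ` (F \<rightarrow>\<^sub>E D'))"
  have cD': "countable D'" using D(2) unfolding D'_def by auto
  have DDc: "countable DD" unfolding DD_def
    by (intro countable_UN[OF countable_Collect_finite] countable_image countable_PiE cD') auto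
  have DDs: "DD \<subseteq> Dp p d X A"
  proof
    fix \<sigma> assume "\<sigma> \<in> DD"
    then obtain F y where "finite F" "y \<in> F \<rightarrow>\<^sub>E D'" "\<sigma> = (F, y)" unfolding DD_def by blast
    moreover have "(F, y) \<in> Dp p d X A" using D(1) \<open>y \<in> F \<rightarrow>\<^sub>E D'\<close>
      by (intro finite_Dp p1 \<open>finite F\<close>) (auto simp: D'_def)
    ultimately show "\<sigma> \<in> Dp p d X A" by simp
  qed
  have mk: "\<exists>\<sigma>\<in>DD. Wp p d A (I, x) \<sigma> \<le> lpnorm p (\<lambda>i. if i \<in> F then d (x i) (y i) else d (x i) (z i)) I"
    if F: "finite F" "F \<subseteq> I" and y: "\<And>i. i \<in> F \<Longrightarrow> y i \<in> D'" and z: "\<And>i. i \<in> I - F \<Longrightarrow> z i \<in> A"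
    for F I x y z
  proof -
    have inDD: "(F, restrict y F) \<in> DD" unfolding DD_def using F y by auto
    have "(F, id, z, z) \<in> matchings A (I, x) (F, restrict y F)"
      using F z by (auto simp: matchings_def)
    then have "Wp p d A (I, x) (F, restrict y F) \<le> match_cost p d (I, x) (F, restrict y F) F id z z"
      by (rule Wp_le)
    also have "\<dots> = lpnorm p (\<lambda>i. if i \<in> F then d (x i) (restrict y F i) else d (x i) (z i)) I"
      by (rule cost_eq[OF F(2)])
    also have "(\<lambda>i. if i \<in> F then d (x i) (restrict y F i) else d (x i) (z i)) = (\<lambda>i. if i \<in> F then d (x i) (y i) else d (x i) (z i))"
      by auto
    finally show ?thesis using inDD by blast
  qed
  show ?thesis unfolding separable_e_def
  proof (intro exI[of _ DD] conjI DDs DDc ballI allI impI)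
    fix \<alpha> and e :: ennreal assume \<alpha>: "\<alpha> \<in> Dp p d X A" and e: "e > 0"
    obtain I x where \<alpha>eq: "\<alpha> = (I, x)" by (cases \<alpha>)
    have xX: "\<And>i. i \<in> I \<Longrightarrow> x i \<in> X - A" using \<alpha> Dp_sub \<alpha>eq by (force simp: dgms_def)
    define \<epsilon> where "\<epsilon> = (if e = top then 1 else enn2real e)"
    have \<epsilon>: "\<epsilon> > 0" "ennreal \<epsilon> \<le> e" using e unfolding \<epsilon>_def
      by (auto simp: enn2real_positive_iff less_top)
    have "\<exists>\<sigma>\<in>DD. Wp p d A (I, x) \<sigma> < ennreal \<epsilon>"
    proof (cases "p = top")
      case True
      define F where "F = {i\<in>I. \<not> setdist_e d (x i) A < ennreal (\<epsilon>/2)}"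
      have "\<forall>\<delta>::real. \<delta> > 0 \<longrightarrow> finite (fst (u_part d A (ennreal \<delta>) (I, x)))"
        using \<alpha> True unfolding \<alpha>eq by (simp add: Dp_def)
      then have "finite (fst (u_part d A (ennreal (\<epsilon>/2)) (I, x)))" using \<epsilon> by simp
      then have Ffin: "finite F" by (simp add: u_part_def F_def)
      define y where "y i = (SOME y. y \<in> D' \<and> d (x i) y < ennreal (\<epsilon>/2))" for i
      have y: "y i \<in> D' \<and> d (x i) (y i) < ennreal (\<epsilon>/2)" if "i \<in> F" for i
      proof -
        have iI: "i \<in> I" using that unfolding F_def by blast
        have "\<exists>y\<in>D'. d (x i) y < ennreal (\<epsilon>/2)" using approx[OF xX[OF iI], of "\<epsilon>/2"] \<epsilon> by simp
        then obtain yy where "yy \<in> D'" "d (x i) yy < ennreal (\<epsilon>/2)" by blast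
        then show ?thesis unfolding y_def by (rule someI[where x=yy, OF conjI])
      qed
      define z where "z i = (SOME a. a \<in> A \<and> d (x i) a < ennreal (\<epsilon>/2))" for i
      have z: "z i \<in> A \<and> d (x i) (z i) < ennreal (\<epsilon>/2)" if "i \<in> I - F" for i
      proof -
        have "setdist_e d (x i) A < ennreal (\<epsilon>/2)" using that unfolding F_def by blast
        then obtain a where "a \<in> A" "d (x i) a < ennreal (\<epsilon>/2)" by (rule setdist_lt)
        then show ?thesis unfolding z_def by (rule someI[where x=a, OF conjI])
      qed
      have "\<exists>\<sigma>\<in>DD. Wp p d A (I, x) \<sigma> \<le> lpnorm p (\<lambda>i. if i \<in> F then d (x i) (y i) else d (x i) (z i)) I"
      proof (rule mk)
        show "finite F" by (rule Ffin)
        show "F \<subseteq> I" unfolding F_def by blast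
        show "\<And>i. i \<in> F \<Longrightarrow> y i \<in> D'" using y by blast
        show "\<And>i. i \<in> I - F \<Longrightarrow> z i \<in> A" using z by blast
      qed
      then obtain \<sigma> where \<sigma>: "\<sigma> \<in> DD" "Wp p d A (I, x) \<sigma> \<le> lpnorm p (\<lambda>i. if i \<in> F then d (x i) (y i) else d (x i) (z i)) I"
        by blast
      have "lpnorm p (\<lambda>i. if i \<in> F then d (x i) (y i) else d (x i) (z i)) I \<le> ennreal (\<epsilon>/2)"
        unfolding lpnorm_def if_P[OF True]
      proof (rule SUP_least)
        fix i assume i: "i \<in> I"
        show "(if i \<in> F then d (x i) (y i) else d (x i) (z i)) \<le> ennreal (\<epsilon>/2)"
        proof (cases "i \<in> F")
          case True then show ?thesis using y[OF True] by (simp add: less_imp_le)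
        next
          case False then show ?thesis using z[of i] i by (simp add: less_imp_le)
        qed
      qed
      also have "\<dots> < ennreal \<epsilon>" using \<epsilon> by (simp add: ennreal_lessI)
      finally show ?thesis using \<sigma> by (meson le_less_trans)
    next
      case False
      define q where "q = enn2real p"
      have q: "q > 0" using q_pos[OF p1 False] q_def by simp
      define U where "U = {i\<in>I. \<not> setdist_e d (x i) A < top}"
      define L where "L = {i\<in>I. setdist_e d (x i) A < top}"
      have Ufin: "finite U" and WL: "Wp p d A (L, x) empty_dgm < top"
        using \<alpha> False unfolding \<alpha>eq by (auto simp: Dp_def u_part_def l_part_def U_def L_def)
      then obtain K \<phi> z w where m: "(K, \<phi>, z, w) \<in> matchings A (L, x) empty_dgm"
         and mc: "match_cost p d (L, x) empty_dgm K \<phi> z w < top"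
        unfolding Wp_def by (auto simp: INF_less_iff)
      have K: "K = {}" using m by (auto simp: matchings_def empty_dgm_def)
      have zA: "\<And>i. i \<in> L \<Longrightarrow> z i \<in> A" using m K by (auto simp: matchings_def)
      define g where "g i = enn_pow q (d (x i) (z i))" for i
      have "match_cost p d (L, x) empty_dgm K \<phi> z w = lpnorm p (\<lambda>s. case s of Inl i \<Rightarrow> d (x i) (z i) | Inr j \<Rightarrow> d (w j) undefined) (Inl ` L)"
        unfolding match_cost_def K fst_conv snd_conv by (simp add: empty_dgm_def)
      also have "\<dots> = enn_pow (1/q) (\<Sum>\<^sub>\<infinity>i\<in>L. enn_pow q (d (x i) (z i)))"
        unfolding lp_Inl by (simp add: lpnorm_def False flip: q_def)
      also have "(\<Sum>\<^sub>\<infinity>i\<in>L. enn_pow q (d (x i) (z i))) = infsum g L"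
        unfolding g_def ..
      finally have "infsum g L < top" using mc by (metis ep_top less_top)
      then obtain F1 where F1: "finite F1" "F1 \<subseteq> L" "infsum g (L - F1) < ennreal (\<epsilon> powr q / 2)"
        using tail[of g L "ennreal (\<epsilon> powr q / 2)"] \<epsilon> by auto
      define F where "F = U \<union> F1"
      define N where "N = card F"
      define t where "t = \<epsilon> powr q / (2 * (N + 1))"
      define \<eta> where "\<eta> = t powr (1/q)"
      have t: "t > 0" using \<epsilon> unfolding t_def by simp
      have \<eta>: "\<eta> > 0" "\<eta> powr q = t" using t q unfolding \<eta>_def by (auto simp: powr_powr)
      have Ffin: "finite F" "F \<subseteq> I" using Ufin F1 unfolding F_def U_def L_def by auto
      have IF: "I - F = L - F1" unfolding F_def U_def L_def by auto
      define y where "y i = (SOME y. y \<in> D' \<and> d (x i) y < ennreal \<eta>)" for i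
      have y: "y i \<in> D' \<and> d (x i) (y i) < ennreal \<eta>" if "i \<in> F" for i
      proof -
        have iI: "i \<in> I" using that Ffin by blast
        have "\<exists>y\<in>D'. d (x i) y < ennreal \<eta>" using approx[OF xX[OF iI], of "\<eta>"] \<eta> by simp
        then obtain yy where "yy \<in> D'" "d (x i) yy < ennreal \<eta>" by blast
        then show ?thesis unfolding y_def by (rule someI[where x=yy, OF conjI])
      qed
      have "\<exists>\<sigma>\<in>DD. Wp p d A (I, x) \<sigma> \<le> lpnorm p (\<lambda>i. if i \<in> F then d (x i) (y i) else d (x i) (z i)) I"
        by (rule mk) (use Ffin y zA IF in auto)
      then obtain \<sigma> where \<sigma>: "\<sigma> \<in> DD" "Wp p d A (I, x) \<sigma> \<le> lpnorm p (\<lambda>i. if i \<in> F then d (x i) (y i) else d (x i) (z i)) I"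
        by blast
      define h where "h i = enn_pow q (if i \<in> F then d (x i) (y i) else d (x i) (z i))" for i
      have split: "infsum h I = sum h F + infsum h (I - F)"
      proof -
        have "infsum h I = infsum h (F \<union> (I - F))" using Ffin by (simp add: Un_absorb1)
        also have "\<dots> = sum h F + infsum h (I - F)"
          by (subst infsum_Un_disjoint) (use Ffin in auto)
        finally show ?thesis .
      qed
      have tl: "infsum h (I - F) = infsum g (L - F1)"
        unfolding IF[symmetric] by (rule infsum_cong) (simp add: h_def g_def)
      have s1: "sum h F \<le> sum (\<lambda>i. ennreal t) F"
      proof (rule sum_mono)
        fix i assume i: "i \<in> F"
        have "h i = enn_pow q (d (x i) (y i))" using i by (simp add: h_def)
        also have "\<dots> < ennreal (\<eta> powr q)" using y[OF i] q \<eta> by (intro ep_less) auto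
        finally show "h i \<le> ennreal t" using \<eta> by simp
      qed
      have s2: "sum (\<lambda>i. ennreal t) F = ennreal (N * t)"
        unfolding N_def using t by (simp add: ennreal_of_nat_eq_real_of_nat ennreal_mult)
      have s3: "N * t < \<epsilon> powr q / 2"
      proof -
        have "N * t = (\<epsilon> powr q / 2) * (N / (N + 1))" unfolding t_def by (simp add: field_simps)
        also have "\<dots> < (\<epsilon> powr q / 2) * 1" using \<epsilon> by (intro mult_strict_left_mono) auto
        finally show ?thesis by simp
      qed
      have s4: "sum h F \<le> ennreal (N * t)" using s1 s2 by simp
      have s5: "ennreal (N * t) < ennreal (\<epsilon> powr q / 2)"
        using s3 \<epsilon> by (intro ennreal_lessI) auto
      have s6: "sum h F < ennreal (\<epsilon> powr q / 2)"
        using s4 s5 by (rule le_less_trans)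
      have s7: "infsum h (I - F) < ennreal (\<epsilon> powr q / 2)"
        using tl F1(3) by simp
      have "sum h F + infsum h (I - F) < ennreal (\<epsilon> powr q / 2 + \<epsilon> powr q / 2)"
        by (rule add_mono_ennreal[OF s6 s7])
      then have s8: "infsum h I < ennreal (\<epsilon> powr q)" unfolding split by simp
      have s9: "enn_pow (1/q) (infsum h I) < ennreal \<epsilon>"
        by (rule ep_upper[OF q s8 \<epsilon>(1)])
      have s10: "lpnorm p (\<lambda>i. if i \<in> F then d (x i) (y i) else d (x i) (z i)) I = enn_pow (1/q) (infsum h I)"
        unfolding lpnorm_def if_not_P[OF False] h_def q_def ..
      have "Wp p d A (I, x) \<sigma> < ennreal \<epsilon>"
        using \<sigma>(2) s9 unfolding s10 by (rule le_less_trans)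
      then show ?thesis using \<sigma>(1) by blast
    qed
    then show "\<exists>c\<in>DD. Wp p d A \<alpha> c < e" using \<epsilon> \<alpha>eq by (meson less_le_trans)
  qed
qed


theorem theorem6p2:
  fixes X A :: "'a set" and d :: "'a \<Rightarrow> 'a \<Rightarrow> ennreal" and p :: ennreal
  assumes "metric_pair X d A" and "1 \<le> p"
  shows "(separable_e X d \<longrightarrow> separable_e (Dp p d X A) (Wp p d A))
       \<and> (separable_e (Dp p d X A) (Wp p d A) \<longrightarrow> separable_e (quotX X A) (dquot p d A))"
  using part1[OF assms] part2[OF assms] by blast

end
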